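(* Let $\lambda_0,\lambda_1$ be real and $a<b$. The smallest constant $C$ such that every $f\in C^2[a,b]$ with $f(a)=f(b)=0$ satisfies $|f(t)|\le C\max_{\theta\in[a,b]}|L_{(\lambda_0,\lambda_1)}f(\theta)|$ for all $t\in[a,b]$ is $C=M^{a,b}_{\lambda_0,\lambda_1}$. Moreover $\Omega^{a,b}_{\lambda_0,\lambda_1,0}(t)>0$ for all $t\in(a,b)$.
   Context: For real $\lambda_0,\dots,\lambda_N$, $L_{(\lambda_0,\dots,\lambda_N)}=\prod_{j=0}^N(\frac{d}{dt}-\lambda_j)$ and $E(\lambda_0,\dots,\lambda_N)=\{f\in C^{N+1}(\mathbb{R}):L_{(\lambda_0,\dots,\lambda_N)}f=0\}$. For real $\lambda_0,\lambda_1$ and $a<b$, $\Omega^{a,b}_{\lambda_0,\lambda_1,0}$ denotes the unique $u\in E(\lambda_0,\lambda_1,0)$ with $u(a)=u(b)=0$ and $L_{(\lambda_0,\lambda_1)}u\equiv-1$, and $M^{a,b}_{\lambda_0,\lambda_1}:=\max_{t\in[a,b]}|\Omega^{a,b}_{\lambda_0,\lambda_1,0}(t)|$. *)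

theory Defs
  imports "HOL-Analysis.Analysis"
begin

text \<open>The differential operator L_{(l_0,...,l_N)} = prod_j (d/dt - l_j), applied to a
  function on the reals; the list [l_0,...,l_N] lists the lambdas. The factors commute
  (constant coefficients), so the order of application is immaterial.\<close>
fun Lop :: "real list \<Rightarrow> (real \<Rightarrow> real) \<Rightarrow> real \<Rightarrow> real" where
  "Lop [] f = f"
| "Lop (l # ls) f = (\<lambda>t. deriv (Lop ls f) t - l * Lop ls f t)"

definition Ck :: "nat \<Rightarrow> (real \<Rightarrow> real) \<Rightarrow> bool" where
  "Ck k f \<longleftrightarrow> (\<forall>j<k. \<forall>t. (deriv ^^ j) f differentiable (at t)) \<and> continuous_on UNIV ((deriv ^^ k) f)"

text \<open>E(l_0,...,l_N), for the list ls = [l_0,...,l_N] (so N+1 = length ls).\<close>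
definition Espace :: "real list \<Rightarrow> (real \<Rightarrow> real) set" where
  "Espace ls = {f. Ck (length ls) f \<and> (\<forall>t. Lop ls f t = 0)}"

definition Omega :: "real \<Rightarrow> real \<Rightarrow> real \<Rightarrow> real \<Rightarrow> (real \<Rightarrow> real)" where
  "Omega a b l0 l1 = (THE u. u \<in> Espace [l0, l1, 0] \<and> u a = 0 \<and> u b = 0
                        \<and> (\<forall>t. Lop [l0, l1] u t = -1))"

definition Mconst :: "real \<Rightarrow> real \<Rightarrow> real \<Rightarrow> real \<Rightarrow> real" where
  "Mconst a b l0 l1 = (SUP t\<in>{a..b}. \<bar>Omega a b l0 l1 t\<bar>)"

text \<open>f in C^2[a,b] with first and second derivatives f1, f2 (one-sided at the endpoints).\<close>
definition C2_on :: "real \<Rightarrow> real \<Rightarrow> (real \<Rightarrow> real) \<Rightarrow> (real \<Rightarrow> real) \<Rightarrow> (real \<Rightarrow> real) \<Rightarrow> bool" where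
  "C2_on a b f f1 f2 \<longleftrightarrow>
     (\<forall>t\<in>{a..b}. (f has_real_derivative f1 t) (at t within {a..b})) \<and>
     (\<forall>t\<in>{a..b}. (f1 has_real_derivative f2 t) (at t within {a..b})) \<and>
     continuous_on {a..b} f2"

end

theory Submission
  imports Defs "HOL-Analysis.Analysis"
begin


lemma mvt_sub:
  fixes f :: "real \<Rightarrow> real"
  assumes "a \<le> c" "c < d" "d \<le> b"
    and D: "\<forall>t\<in>{a..b}. (f has_real_derivative f' t) (at t within {a..b})"
  shows "\<exists>x\<in>{c<..<d}. f d - f c = f' x * (d - c)"
proof -
  have "\<exists>x\<in>{c<..<d}. f d - f c = (\<lambda>h. f' x * h) (d - c)"
  proof (rule mvt_simple[OF \<open>c<d\<close>])
    fix x assume "c \<le> x" "x \<le> d"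
    then have "x \<in> {a..b}" using assms by auto
    then have "(f has_real_derivative f' x) (at x within {a..b})" using D by blast
    then have "(f has_real_derivative f' x) (at x within {c..d})"
      by (rule DERIV_subset) (use assms in auto)
    then show "(f has_derivative (\<lambda>h. f' x * h)) (at x within {c..d})"
      by (simp add: has_field_derivative_def)
  qed
  then show ?thesis by simp
qed

lemma maxp:
  fixes g gd gdd :: "real \<Rightarrow> real"
  assumes ab: "a < b"
    and D1: "\<forall>t\<in>{a..b}. (g has_real_derivative gd t) (at t within {a..b})"
    and D2: "\<forall>t\<in>{a..b}. (gd has_real_derivative gdd t) (at t within {a..b})"
    and ga: "g a = 0" and gb: "g b = 0"
    and H: "\<forall>t\<in>{a..b}. gdd t - (la+lb) * gd t + la*lb*g t \<le> 0"
  shows "\<forall>t\<in>{a..b}. g t \<ge> 0"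
    and "(\<forall>t\<in>{a..b}. gdd t - (la+lb) * gd t + la*lb*g t < 0) \<Longrightarrow> \<forall>t\<in>{a<..<b}. g t > 0"
proof -
  define \<psi> where "\<psi> t = exp (-la*t) * (gd t - lb * g t)" for t
  define \<phi> where "\<phi> t = exp (-lb*t) * g t" for t
  have Dpsi: "\<forall>t\<in>{a..b}. (\<psi> has_real_derivative exp (-la*t) * (gdd t - (la+lb) * gd t + la*lb*g t)) (at t within {a..b})"
  proof
    fix t assume t: "t \<in> {a..b}"
    have "((\<lambda>t. exp (-la*t) * (gd t - lb * g t)) has_real_derivative
       (exp (-la*t) * (-la)) * (gd t - lb * g t) + exp (-la*t) * (gdd t - lb * gd t)) (at t within {a..b})"
      using D1 D2 t by (auto intro!: derivative_eq_intros)
    then show "(\<psi> has_real_derivative exp (-la*t) * (gdd t - (la+lb) * gd t + la*lb*g t)) (at t within {a..b})"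
      unfolding \<psi>_def[abs_def] by (simp add: algebra_simps)
  qed
  have Dphi: "\<forall>t\<in>{a..b}. (\<phi> has_real_derivative exp ((la-lb)*t) * \<psi> t) (at t within {a..b})"
  proof
    fix t assume t: "t \<in> {a..b}"
    have "((\<lambda>t. exp (-lb*t) * g t) has_real_derivative
       (exp (-lb*t) * (-lb)) * g t + exp (-lb*t) * gd t) (at t within {a..b})"
      using D1 t by (auto intro!: derivative_eq_intros)
    moreover have "exp ((la-lb)*t) * \<psi> t = (exp (-lb*t) * (-lb)) * g t + exp (-lb*t) * gd t"
      unfolding \<psi>_def by (simp add: algebra_simps flip: exp_add)
    ultimately show "(\<phi> has_real_derivative exp ((la-lb)*t) * \<psi> t) (at t within {a..b})"
      unfolding \<phi>_def[abs_def] by simp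
  qed
  have psimono: "\<psi> d \<le> \<psi> c" if cd: "a \<le> c" "c \<le> d" "d \<le> b" for c d
  proof (cases "c = d")
    case False
    then obtain x where x: "x \<in> {c<..<d}" "\<psi> d - \<psi> c = exp (-la*x) * (gdd x - (la+lb) * gd x + la*lb*g x) * (d - c)"
      using mvt_sub[OF cd(1) _ cd(3) Dpsi] cd by fastforce
    have q: "exp (-la*x) * (gdd x - (la+lb) * gd x + la*lb*g x) \<le> 0"
      using H x that by (intro mult_nonneg_nonpos) auto
    then have "exp (-la*x) * (gdd x - (la+lb) * gd x + la*lb*g x) * (d - c) \<le> 0"
      using cd mult_nonpos_nonneg[OF q, of "d-c"] by auto
    then show ?thesis using x by simp
  qed simp
  have phia: "\<phi> a = 0" and phib: "\<phi> b = 0" using ga gb by (simp_all add: \<phi>_def)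
  show pos: "\<forall>t\<in>{a..b}. g t \<ge> 0"
  proof (rule ccontr)
    assume "\<not> ?thesis"
    then obtain t where t: "t \<in> {a..b}" "g t < 0" by force
    then have pt: "\<phi> t < 0" by (simp add: \<phi>_def mult_pos_neg)
    have "t \<noteq> a" "t \<noteq> b" using t ga gb by auto
    then have at: "a < t" "t < b" using t by auto
    obtain c1 where c1: "c1 \<in> {a<..<t}" "\<phi> t - \<phi> a = exp ((la-lb)*c1) * \<psi> c1 * (t - a)"
      using mvt_sub[OF order.refl at(1) _ Dphi] at by force
    obtain c2 where c2: "c2 \<in> {t<..<b}" "\<phi> b - \<phi> t = exp ((la-lb)*c2) * \<psi> c2 * (b - t)"
      using mvt_sub[OF _ at(2) order.refl Dphi] at by force
    have "exp ((la-lb)*c1) * \<psi> c1 * (t - a) < 0" using c1 pt phia by simp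
    then have n1: "\<psi> c1 < 0" using at
      by (auto simp: mult_less_0_iff)
    have "exp ((la-lb)*c2) * \<psi> c2 * (b - t) > 0" using c2 pt phib by simp
    then have n2: "\<psi> c2 > 0" using at
      by (auto simp: zero_less_mult_iff)
    have "\<psi> c2 \<le> \<psi> c1" using c1 c2 at by (intro psimono) auto
    then show False using n1 n2 by simp
  qed
  assume S: "\<forall>t\<in>{a..b}. gdd t - (la+lb) * gd t + la*lb*g t < 0"
  have psistrict: "\<psi> d < \<psi> c" if cd: "a \<le> c" "c < d" "d \<le> b" for c d
  proof -
    obtain x where x: "x \<in> {c<..<d}" "\<psi> d - \<psi> c = exp (-la*x) * (gdd x - (la+lb) * gd x + la*lb*g x) * (d - c)"
      using mvt_sub[OF cd(1) cd(2) cd(3) Dpsi] by fastforce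
    have q: "exp (-la*x) * (gdd x - (la+lb) * gd x + la*lb*g x) < 0"
      using S x that by (intro mult_pos_neg) auto
    then have "exp (-la*x) * (gdd x - (la+lb) * gd x + la*lb*g x) * (d - c) < 0"
      using cd mult_neg_pos[OF q, of "d-c"] by auto
    then show ?thesis using x by simp
  qed
  show "\<forall>t\<in>{a<..<b}. g t > 0"
  proof (rule ccontr)
    assume "\<not> ?thesis"
    then obtain t where t: "t \<in> {a<..<b}" "g t \<le> 0" by force
    then have "g t = 0" using pos[rule_format, of t] by fastforce
    then have pt: "\<phi> t = 0" by (simp add: \<phi>_def)
    have at: "a < t" "t < b" using t by auto
    obtain c1 where c1: "c1 \<in> {a<..<t}" "\<phi> t - \<phi> a = exp ((la-lb)*c1) * \<psi> c1 * (t - a)"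
      using mvt_sub[OF order.refl at(1) _ Dphi] at by force
    obtain c2 where c2: "c2 \<in> {t<..<b}" "\<phi> b - \<phi> t = exp ((la-lb)*c2) * \<psi> c2 * (b - t)"
      using mvt_sub[OF _ at(2) order.refl Dphi] at by force
    have "\<psi> c1 = 0" using c1 pt phia at by simp
    moreover have "\<psi> c2 = 0" using c2 pt phib at by simp
    moreover have "\<psi> c2 < \<psi> c1" using c1 c2 at by (intro psistrict) auto
    ultimately show False by simp
  qed
qed



definition D3 :: "(real \<Rightarrow> real) \<Rightarrow> (real \<Rightarrow> real) \<Rightarrow> (real \<Rightarrow> real) \<Rightarrow> (real \<Rightarrow> real) \<Rightarrow> bool" where
  "D3 u u1 u2 u3 \<longleftrightarrow> (\<forall>t. (u has_real_derivative u1 t) (at t)) \<and> (\<forall>t. (u1 has_real_derivative u2 t) (at t))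
     \<and> (\<forall>t. (u2 has_real_derivative u3 t) (at t)) \<and> continuous_on UNIV u3"

lemma D3_lin:
  assumes "D3 u u1 u2 u3" "D3 v v1 v2 v3"
  shows "D3 (\<lambda>t. \<alpha> * u t + \<beta> * v t) (\<lambda>t. \<alpha> * u1 t + \<beta> * v1 t) (\<lambda>t. \<alpha> * u2 t + \<beta> * v2 t) (\<lambda>t. \<alpha> * u3 t + \<beta> * v3 t)"
  using assms unfolding D3_def by (auto intro!: derivative_eq_intros continuous_intros)

lemma D3_exp:
  "D3 (\<lambda>t. exp (l*(t-a))) (\<lambda>t. l * exp (l*(t-a))) (\<lambda>t. l * (l * exp (l*(t-a)))) (\<lambda>t. l * (l * (l * exp (l*(t-a)))))"
  unfolding D3_def by (auto intro!: derivative_eq_intros continuous_intros)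

lemma D3_texp:
  "D3 (\<lambda>t. (t-a) * exp (l*(t-a))) (\<lambda>t. (1 + l*(t-a)) * exp (l*(t-a))) (\<lambda>t. (2*l + l*l*(t-a)) * exp (l*(t-a)))
      (\<lambda>t. (3*l*l + l*l*l*(t-a)) * exp (l*(t-a)))"
  unfolding D3_def by (auto intro!: derivative_eq_intros continuous_intros simp: algebra_simps)

lemma D3_const: "D3 (\<lambda>t. c) (\<lambda>t. 0) (\<lambda>t. 0) (\<lambda>t. 0)"
  unfolding D3_def by (auto intro!: derivative_eq_intros continuous_intros)

lemma D3_lin1: "D3 (\<lambda>t. c * t) (\<lambda>t. c) (\<lambda>t. 0) (\<lambda>t. 0)"
  unfolding D3_def by (auto intro!: derivative_eq_intros continuous_intros)

lemma D3_sq: "D3 (\<lambda>t. c * (t * t)) (\<lambda>t. c * (2 * t)) (\<lambda>t. 2 * c) (\<lambda>t. 0)"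
  unfolding D3_def by (auto intro!: derivative_eq_intros continuous_intros simp: algebra_simps)

lemma part_sol:
  "\<exists>p p1 p2 p3. D3 p p1 p2 p3 \<and> (\<forall>t. p2 t - (l0+l1) * p1 t + l0*l1 * p t = -1)"
proof (cases "l0 * l1 = 0")
  case False
  then show ?thesis using D3_const[of "-1/(l0*l1)"] by (intro exI[of _ "\<lambda>t. -1/(l0*l1)"] exI) auto
next
  case T: True
  show ?thesis
  proof (cases "l0 + l1 = 0")
    case False
    then show ?thesis using T D3_lin1[of "1/(l0+l1)"] by (intro exI[of _ "\<lambda>t. 1/(l0+l1) * t"] exI[of _ "\<lambda>t. 1/(l0+l1)"] exI[of _ "\<lambda>t. 0"] exI[of _ "\<lambda>t. 0"]) (auto simp: algebra_simps)
  next
    case True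
    then show ?thesis using T D3_sq[of "-1/2"] by (intro exI[of _ "\<lambda>t. -1/2 * (t*t)"] exI) auto
  qed
qed

lemma hom2:
  assumes "a < b"
  shows "\<exists>z z1 z2 z3. D3 z z1 z2 z3 \<and> (\<forall>t. z2 t - (l0+l1) * z1 t + l0*l1 * z t = 0) \<and> z a = 0 \<and> z b > 0"
proof (cases "l0 = l1")
  case True
  have "\<forall>t. (2*l0 + l0*l0*(t-a)) * exp (l0*(t-a)) - (l0+l1) * ((1 + l0*(t-a)) * exp (l0*(t-a)))
      + l0*l1 * ((t-a) * exp (l0*(t-a))) = 0"
  proof
    fix t
    have "(2*l0 + l0*l0*(t-a)) * exp (l0*(t-a)) - (l0+l1) * ((1 + l0*(t-a)) * exp (l0*(t-a)))
      + l0*l1 * ((t-a) * exp (l0*(t-a))) = ((2*l0 + l0*l0*(t-a)) - (l0+l0) * (1 + l0*(t-a)) + l0*l0 * (t-a)) * exp (l0*(t-a))"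
      using True by (simp only: algebra_simps)
    also have "\<dots> = 0" by (simp add: algebra_simps)
    finally show "(2*l0 + l0*l0*(t-a)) * exp (l0*(t-a)) - (l0+l1) * ((1 + l0*(t-a)) * exp (l0*(t-a)))
      + l0*l1 * ((t-a) * exp (l0*(t-a))) = 0" .
  qed
  then show ?thesis using True D3_texp[of a l0] assms
    by (intro exI[of _ "\<lambda>t. (t-a) * exp (l0*(t-a))"] exI[of _ "\<lambda>t. (1 + l0*(t-a)) * exp (l0*(t-a))"]
      exI[of _ "\<lambda>t. (2*l0 + l0*l0*(t-a)) * exp (l0*(t-a))"] exI[of _ "\<lambda>t. (3*l0*l0 + l0*l0*l0*(t-a)) * exp (l0*(t-a))"] conjI) auto
next
  case False
  define c where "c = 1 / (l0 - l1)"
  have L: "\<forall>t. (c * (l0 * (l0 * exp (l0*(t-a)))) + (-c) * (l1 * (l1 * exp (l1*(t-a)))))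
     - (l0+l1) * (c * (l0 * exp (l0*(t-a))) + (-c) * (l1 * exp (l1*(t-a))))
      + l0*l1 * (c * exp (l0*(t-a)) + (-c) * exp (l1*(t-a))) = 0"
    by (simp add: algebra_simps)
  have pos: "c * exp (l0*(b-a)) + (-c) * exp (l1*(b-a)) > 0"
  proof (cases "l0 > l1")
    case True
    then have "exp (l1*(b-a)) < exp (l0*(b-a))" using assms by simp
    moreover have "c > 0" using True by (simp add: c_def)
    ultimately have "c * (exp (l0*(b-a)) - exp (l1*(b-a))) > 0" by simp
    then show ?thesis by (simp add: algebra_simps)
  next
    case F: False
    then have "l0 < l1" using False by simp
    then have "exp (l0*(b-a)) < exp (l1*(b-a))" using assms by simp
    moreover have "c < 0" using \<open>l0 < l1\<close> by (simp add: c_def)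
    ultimately have "c * (exp (l0*(b-a)) - exp (l1*(b-a))) > 0" by (simp add: mult_neg_neg)
    then show ?thesis by (simp add: algebra_simps)
  qed
  show ?thesis using D3_lin[OF D3_exp[of l0 a] D3_exp[of l1 a], of c "-c"] L pos
    by (intro exI[of _ "\<lambda>t. c * exp (l0*(t-a)) + (-c) * exp (l1*(t-a))"]
      exI[of _ "\<lambda>t. c * (l0 * exp (l0*(t-a))) + (-c) * (l1 * exp (l1*(t-a)))"]
      exI[of _ "\<lambda>t. c * (l0 * (l0 * exp (l0*(t-a)))) + (-c) * (l1 * (l1 * exp (l1*(t-a))))"]
      exI[of _ "\<lambda>t. c * (l0 * (l0 * (l0 * exp (l0*(t-a))))) + (-c) * (l1 * (l1 * (l1 * exp (l1*(t-a)))))"] conjI) auto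
qed

lemma exist_sol:
  assumes "a < b"
  shows "\<exists>u u1 u2 u3. D3 u u1 u2 u3 \<and> u a = 0 \<and> u b = 0 \<and> (\<forall>t. u2 t - (l0+l1) * u1 t + l0*l1 * u t = -1)"
proof -
  obtain p p1 p2 p3 where P: "D3 p p1 p2 p3" "\<forall>t. p2 t - (l0+l1) * p1 t + l0*l1 * p t = -1"
    using part_sol by blast
  obtain z z1 z2 z3 where Z: "D3 z z1 z2 z3" "\<forall>t. z2 t - (l0+l1) * z1 t + l0*l1 * z t = 0" "z a = 0" "z b > 0"
    using hom2[OF assms] by blast
  define y where "y t = exp (l1*(t-a))" for t
  define y1 where "y1 t = l1 * exp (l1*(t-a))" for t
  define y2 where "y2 t = l1 * (l1 * exp (l1*(t-a)))" for t
  define y3 where "y3 t = l1 * (l1 * (l1 * exp (l1*(t-a))))" for t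
  have Y: "D3 y y1 y2 y3" using D3_exp[of l1 a] unfolding y_def[abs_def] y1_def[abs_def] y2_def[abs_def] y3_def[abs_def] .
  have YL: "\<forall>t. y2 t - (l0+l1) * y1 t + l0*l1 * y t = 0" by (simp add: y_def y1_def y2_def algebra_simps)
  define \<alpha> where "\<alpha> = - p a"
  define \<beta> where "\<beta> = - (p b + \<alpha> * y b) / z b"
  have D: "D3 (\<lambda>t. 1 * (1 * p t + \<alpha> * y t) + \<beta> * z t) (\<lambda>t. 1 * (1 * p1 t + \<alpha> * y1 t) + \<beta> * z1 t)
      (\<lambda>t. 1 * (1 * p2 t + \<alpha> * y2 t) + \<beta> * z2 t) (\<lambda>t. 1 * (1 * p3 t + \<alpha> * y3 t) + \<beta> * z3 t)"
    by (rule D3_lin[OF D3_lin[OF P(1) Y] Z(1)])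
  have "\<forall>t. (1 * (1 * p2 t + \<alpha> * y2 t) + \<beta> * z2 t) - (l0+l1) * (1 * (1 * p1 t + \<alpha> * y1 t) + \<beta> * z1 t)
     + l0*l1 * (1 * (1 * p t + \<alpha> * y t) + \<beta> * z t) = -1"
  proof
    fix t
    have "(1 * (1 * p2 t + \<alpha> * y2 t) + \<beta> * z2 t) - (l0+l1) * (1 * (1 * p1 t + \<alpha> * y1 t) + \<beta> * z1 t)
     + l0*l1 * (1 * (1 * p t + \<alpha> * y t) + \<beta> * z t) =
      (p2 t - (l0+l1) * p1 t + l0*l1 * p t) + \<alpha> * (y2 t - (l0+l1) * y1 t + l0*l1 * y t)
      + \<beta> * (z2 t - (l0+l1) * z1 t + l0*l1 * z t)" by (simp add: algebra_simps)
    then show "(1 * (1 * p2 t + \<alpha> * y2 t) + \<beta> * z2 t) - (l0+l1) * (1 * (1 * p1 t + \<alpha> * y1 t) + \<beta> * z1 t)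
     + l0*l1 * (1 * (1 * p t + \<alpha> * y t) + \<beta> * z t) = -1" using P(2) YL Z(2) by simp
  qed
  moreover have "1 * (1 * p a + \<alpha> * y a) + \<beta> * z a = 0" using Z(3) by (simp add: \<alpha>_def y_def)
  moreover have "1 * (1 * p b + \<alpha> * y b) + \<beta> * z b = 0" using Z(4) by (simp add: \<beta>_def)
  ultimately show ?thesis using D by blast
qed



lemma Lop2:
  assumes d1: "\<forall>t. (u has_real_derivative u1 t) (at t)" and d2: "\<forall>t. (u1 has_real_derivative u2 t) (at t)"
  shows "Lop [l0,l1] u = (\<lambda>t. u2 t - (l0+l1) * u1 t + l0*l1 * u t)"
proof -
  have du: "deriv u = u1" using d1 by (intro ext DERIV_imp_deriv) auto
  have "deriv (\<lambda>t. u1 t - l1 * u t) = (\<lambda>t. u2 t - l1 * u1 t)"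
    using d1 d2 by (intro ext DERIV_imp_deriv) (auto intro!: derivative_eq_intros)
  then show ?thesis by (simp add: du algebra_simps)
qed

lemma Lop3:
  assumes "D3 u u1 u2 u3"
  shows "Lop [l0,l1,0] u = (\<lambda>t. u3 t - (l0+l1) * u2 t + l0*l1 * u1 t)"
proof -
  have du: "deriv u = u1" using assms by (intro ext DERIV_imp_deriv) (auto simp: D3_def)
  have "Lop [0] u = u1" by (simp add: du)
  moreover have "Lop [l0,l1,0] u = Lop [l0,l1] (Lop [0] u)" by simp
  ultimately show ?thesis using Lop2[of u1 u2 u3 l0 l1] assms by (simp add: D3_def)
qed

lemma D3_Ck:
  assumes "D3 u u1 u2 u3"
  shows "Ck 3 u"
proof -
  have d: "deriv u = u1" "deriv u1 = u2" "deriv u2 = u3" using assms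
    by (auto intro!: ext DERIV_imp_deriv simp: D3_def)
  have e: "(deriv ^^ 0) u = u" "(deriv ^^ 1) u = u1" "(deriv ^^ 2) u = u2" "(deriv ^^ 3) u = u3"
    by (simp_all add: d numeral_2_eq_2 numeral_3_eq_3)
  have "\<forall>j<3. \<forall>t. (deriv ^^ j) u differentiable (at t)"
  proof (intro allI impI)
    fix j t assume "j < (3::nat)"
    then have "j = 0 \<or> j = 1 \<or> j = 2" by auto
    moreover have "u differentiable (at t)" "u1 differentiable (at t)" "u2 differentiable (at t)"
      using assms unfolding D3_def real_differentiable_def by blast+
    ultimately show "(deriv ^^ j) u differentiable (at t)"
      using e by (elim disjE) simp_all
  qed
  then show ?thesis unfolding Ck_def using e assms by (simp add: D3_def)
qed

lemma uniq0:
  fixes w wd wdd :: "real \<Rightarrow> real"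
  assumes ab: "a < b"
    and d1: "\<forall>t. (w has_real_derivative wd t) (at t)" and d2: "\<forall>t. (wd has_real_derivative wdd t) (at t)"
    and L: "\<forall>t. wdd t - (l0+l1) * wd t + l0*l1 * w t = 0" and wa: "w a = 0" and wb: "w b = 0"
  shows "w t = 0"
proof -
  define \<psi> where "\<psi> t = exp (-l0*t) * (wd t - l1 * w t)" for t
  define \<phi> where "\<phi> t = exp (-l1*t) * w t" for t
  have Dpsi: "(\<psi> has_real_derivative 0) (at t)" for t
  proof -
    have "((\<lambda>t. exp (-l0*t) * (wd t - l1 * w t)) has_real_derivative
       (exp (-l0*t) * (-l0)) * (wd t - l1 * w t) + exp (-l0*t) * (wdd t - l1 * wd t)) (at t)"
      using d1 d2 by (auto intro!: derivative_eq_intros)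
    moreover have "(exp (-l0*t) * (-l0)) * (wd t - l1 * w t) + exp (-l0*t) * (wdd t - l1 * wd t)
        = exp (-l0*t) * (wdd t - (l0+l1) * wd t + l0*l1 * w t)" by (simp add: algebra_simps)
    ultimately show ?thesis using L unfolding \<psi>_def[abs_def] by simp
  qed
  obtain C where C: "\<And>t. \<psi> t = C"
    using has_field_derivative_zero_constant[of UNIV \<psi>] Dpsi by auto
  have Dphi: "(\<phi> has_real_derivative exp ((l0-l1)*t) * C) (at t)" for t
  proof -
    have "((\<lambda>t. exp (-l1*t) * w t) has_real_derivative
       (exp (-l1*t) * (-l1)) * w t + exp (-l1*t) * wd t) (at t)"
      using d1 by (auto intro!: derivative_eq_intros)
    moreover have "exp ((l0-l1)*t) * \<psi> t = (exp (-l1*t) * (-l1)) * w t + exp (-l1*t) * wd t"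
      unfolding \<psi>_def by (simp add: algebra_simps flip: exp_add)
    ultimately show ?thesis using C unfolding \<phi>_def[abs_def] by metis
  qed
  have "\<exists>x\<in>{a<..<b}. \<phi> b - \<phi> a = (\<lambda>h. exp ((l0-l1)*x) * C * h) (b - a)"
    using Dphi by (intro mvt_simple[OF ab]) (auto simp: has_field_derivative_def intro: has_derivative_at_withinI)
  then obtain x where "\<phi> b - \<phi> a = exp ((l0-l1)*x) * C * (b - a)" by auto
  then have "C = 0" using wa wb ab by (simp add: \<phi>_def)
  then have "\<And>t. (\<phi> has_real_derivative 0) (at t)" using Dphi by simp
  then obtain K where "\<And>t. \<phi> t = K"
    using has_field_derivative_zero_constant[of UNIV \<phi>] by auto
  then have "\<phi> t = \<phi> a" by simp
  then show ?thesis using wa by (simp add: \<phi>_def)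
qed


lemma L3:
  assumes U: "D3 u u1 u2 u3" "\<forall>t. u2 t - (l0+l1) * u1 t + l0*l1 * u t = -1"
  shows "Lop [l0,l1,0] u t = 0"
  proof -
    have "((\<lambda>t. u2 t - (l0+l1) * u1 t + l0*l1 * u t) has_real_derivative u3 t - (l0+l1) * u2 t + l0*l1 * u1 t) (at t)"
      using U(1) unfolding D3_def by (auto intro!: derivative_eq_intros)
    moreover have "(\<lambda>t. u2 t - (l0+l1) * u1 t + l0*l1 * u t) = (\<lambda>t. -1)" using U(2) by auto
    ultimately have "((\<lambda>t. -1::real) has_real_derivative u3 t - (l0+l1) * u2 t + l0*l1 * u1 t) (at t)" by simp
    moreover have "((\<lambda>t. -1::real) has_real_derivative 0) (at t)" by simp
    ultimately have "u3 t - (l0+l1) * u2 t + l0*l1 * u1 t = 0" by (rule DERIV_unique)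
    then show ?thesis unfolding Lop3[OF U(1)] by (simp only:)
  qed
lemma L2:
  assumes U: "D3 u u1 u2 u3" "\<forall>t. u2 t - (l0+l1) * u1 t + l0*l1 * u t = -1"
  shows "Lop [l0,l1] u t = -1"
proof -
  have d12: "\<forall>t. (u has_real_derivative u1 t) (at t)" "\<forall>t. (u1 has_real_derivative u2 t) (at t)"
    using U(1) unfolding D3_def by blast+
  show ?thesis
    unfolding Lop2[OF d12] using U(2) by (simp only:)
qed
lemma Esp:
  assumes U: "D3 u u1 u2 u3" "\<forall>t. u2 t - (l0+l1) * u1 t + l0*l1 * u t = -1"
  shows "u \<in> Espace [l0, l1, 0]"
  proof -
    have "Ck (length [l0, l1, 0]) u" using D3_Ck[OF U(1)] by (simp add: numeral_3_eq_3)
    then show "u \<in> Espace [l0, l1, 0]" unfolding Espace_def using L3[OF U] by blast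
  qed
lemma uniqv:
  assumes ab: "a < b" and U: "D3 u u1 u2 u3" "u a = 0" "u b = 0" "\<forall>t. u2 t - (l0+l1) * u1 t + l0*l1 * u t = -1"
  shows "v \<in> Espace [l0, l1, 0] \<and> v a = 0 \<and> v b = 0 \<and> (\<forall>t. Lop [l0, l1] v t = - 1) \<Longrightarrow> v = u"
proof -
  assume V: "v \<in> Espace [l0, l1, 0] \<and> v a = 0 \<and> v b = 0 \<and> (\<forall>t. Lop [l0, l1] v t = - 1)"
  then have "Ck (length [l0, l1, 0]) v" unfolding Espace_def by blast
  then have ck: "Ck 3 v" by (simp only: list.size numeral_3_eq_3) simp
  have c1: "\<forall>j<3. \<forall>t. (deriv ^^ j) v differentiable (at t)" using ck unfolding Ck_def by blast
  have "(deriv ^^ 0) v differentiable (at t)" "(deriv ^^ 1) v differentiable (at t)" for t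
    using c1[rule_format, of 0 t] c1[rule_format, of 1 t] by simp_all
  then have dv: "\<And>t. v differentiable (at t)" "\<And>t. deriv v differentiable (at t)" by simp_all
  have v1: "\<forall>t. (v has_real_derivative deriv v t) (at t)" using dv(1) DERIV_deriv_iff_real_differentiable by blast
  have v2: "\<forall>t. (deriv v has_real_derivative deriv (deriv v) t) (at t)" using dv(2) DERIV_deriv_iff_real_differentiable by blast
  have Lv: "\<forall>t. deriv (deriv v) t - (l0+l1) * deriv v t + l0*l1 * v t = -1"
  proof
    fix t
    from V have "Lop [l0, l1] v t = -1" by blast
    then show "deriv (deriv v) t - (l0+l1) * deriv v t + l0*l1 * v t = -1"
      by (simp only: Lop2[OF v1 v2])
  qed
  have "(\<lambda>t. v t - u t) t = 0" for t
  proof (rule uniq0[OF ab, where w="\<lambda>t. v t - u t" and wd="\<lambda>t. deriv v t - u1 t" and wdd="\<lambda>t. deriv (deriv v) t - u2 t"])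
    show "\<forall>t. ((\<lambda>t. v t - u t) has_real_derivative deriv v t - u1 t) (at t)"
      using v1 U(1) unfolding D3_def by (blast intro: DERIV_diff)
    show "\<forall>t. ((\<lambda>t. deriv v t - u1 t) has_real_derivative deriv (deriv v) t - u2 t) (at t)"
      using v2 U(1) unfolding D3_def by (blast intro: DERIV_diff)
    show "\<forall>t. deriv (deriv v) t - u2 t - (l0 + l1) * (deriv v t - u1 t) + l0 * l1 * (v t - u t) = 0"
    proof
      fix t
      have "deriv (deriv v) t - u2 t - (l0 + l1) * (deriv v t - u1 t) + l0 * l1 * (v t - u t)
        = (deriv (deriv v) t - (l0+l1) * deriv v t + l0*l1 * v t) - (u2 t - (l0+l1) * u1 t + l0*l1 * u t)"
        by (simp add: algebra_simps)
      then show "deriv (deriv v) t - u2 t - (l0 + l1) * (deriv v t - u1 t) + l0 * l1 * (v t - u t) = 0"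
        using Lv U(4) by simp
    qed
    show "v a - u a = 0" "v b - u b = 0" using V U by auto
  qed
  then show "v = u" by auto
qed

lemma Omega_eq:
  assumes ab: "a < b" and U: "D3 u u1 u2 u3" "u a = 0" "u b = 0" "\<forall>t. u2 t - (l0+l1) * u1 t + l0*l1 * u t = -1"
  shows "Omega a b l0 l1 = u"
proof -
  have P: "u \<in> Espace [l0, l1, 0] \<and> u a = 0 \<and> u b = 0 \<and> (\<forall>t. Lop [l0, l1] u t = - 1)"
    using Esp[OF U(1,4)] L2[OF U(1,4)] U(2,3) by blast
  show ?thesis unfolding Omega_def
    by (rule the_equality[where P="\<lambda>w. w \<in> Espace [l0, l1, 0] \<and> w a = 0 \<and> w b = 0 \<and> (\<forall>t. Lop [l0, l1] w t = - 1)", OF P])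
      (rule uniqv[OF ab U])
qed
lemma cont_bdd: "continuous_on {a..b} (g :: real \<Rightarrow> real) \<Longrightarrow> bdd_above (g ` {a..b})"
  by (meson bounded_imp_bdd_above compact_Icc compact_continuous_image compact_imp_bounded)

theorem mainTheorem4:
  fixes l0 l1 a b :: real
  assumes "a < b"
  shows "(let S = {C. \<forall>f f1 f2. C2_on a b f f1 f2 \<and> f a = 0 \<and> f b = 0 \<longrightarrow>
            (\<forall>t\<in>{a..b}. \<bar>f t\<bar> \<le> C * (SUP \<theta>\<in>{a..b}. \<bar>f2 \<theta> - (l0 + l1) * f1 \<theta> + l0 * l1 * f \<theta>\<bar>))}
         in Mconst a b l0 l1 \<in> S \<and> (\<forall>C\<in>S. Mconst a b l0 l1 \<le> C))
       \<and> (\<forall>t\<in>{a<..<b}. Omega a b l0 l1 t > 0)"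
proof -
  obtain u u1 u2 u3 where U: "D3 u u1 u2 u3" "u a = 0" "u b = 0" "\<forall>t. u2 t - (l0+l1) * u1 t + l0*l1 * u t = -1"
    using exist_sol[OF assms] by blast
  have Om: "Omega a b l0 l1 = u" by (rule Omega_eq[OF assms U])
  have ud1: "\<forall>t\<in>{a..b}. (u has_real_derivative u1 t) (at t within {a..b})"
    and ud2: "\<forall>t\<in>{a..b}. (u1 has_real_derivative u2 t) (at t within {a..b})"
    using U(1) unfolding D3_def by (blast intro: has_field_derivative_at_within)+
  have u2c: "continuous_on {a..b} u2"
    using U(1) unfolding D3_def by (intro continuous_at_imp_continuous_on ballI) (blast intro: DERIV_isCont)
  have ucont: "continuous_on {a..b} u"
    using U(1) unfolding D3_def by (intro continuous_at_imp_continuous_on ballI) (blast intro: DERIV_isCont)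
  have Cu: "C2_on a b u u1 u2" using ud1 ud2 u2c by (simp add: C2_on_def)
  have bddu: "bdd_above ((\<lambda>t. \<bar>u t\<bar>) ` {a..b})"
    by (rule cont_bdd) (intro continuous_intros ucont)
  have pos: "\<forall>t\<in>{a<..<b}. u t > 0"
  proof -
    have "\<forall>t\<in>{a..b}. u2 t - (l0+l1) * u1 t + l0*l1*u t \<le> 0" "\<forall>t\<in>{a..b}. u2 t - (l0+l1) * u1 t + l0*l1*u t < 0"
      using U(4) by simp_all
    then show ?thesis by (rule maxp(2)[where la=l0 and lb=l1, OF assms ud1 ud2 U(2,3)])
  qed
  define M where "M = (SUP t\<in>{a..b}. \<bar>u t\<bar>)"
  have Mge: "\<bar>u t\<bar> \<le> M" if "t \<in> {a..b}" for t
    unfolding M_def using bddu that by (rule cSUP_upper2) simp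
  have inS: "\<forall>f f1 f2. C2_on a b f f1 f2 \<and> f a = 0 \<and> f b = 0 \<longrightarrow>
            (\<forall>t\<in>{a..b}. \<bar>f t\<bar> \<le> M * (SUP \<theta>\<in>{a..b}. \<bar>f2 \<theta> - (l0 + l1) * f1 \<theta> + l0 * l1 * f \<theta>\<bar>))"
  proof (intro allI impI ballI)
    fix f f1 f2 t assume H: "C2_on a b f f1 f2 \<and> f a = 0 \<and> f b = 0" and t: "t \<in> {a..b}"
    define K where "K = (SUP \<theta>\<in>{a..b}. \<bar>f2 \<theta> - (l0 + l1) * f1 \<theta> + l0 * l1 * f \<theta>\<bar>)"
    have fd1: "\<forall>t\<in>{a..b}. (f has_real_derivative f1 t) (at t within {a..b})"
      and fd2: "\<forall>t\<in>{a..b}. (f1 has_real_derivative f2 t) (at t within {a..b})"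
      and f2c: "continuous_on {a..b} f2"
      using H by (auto simp: C2_on_def)
    have fc: "continuous_on {a..b} f" unfolding continuous_on_eq_continuous_within
      using fd1 DERIV_continuous by blast
    have f1c: "continuous_on {a..b} f1" unfolding continuous_on_eq_continuous_within
      using fd2 DERIV_continuous by blast
    have bddf: "bdd_above ((\<lambda>\<theta>. \<bar>f2 \<theta> - (l0 + l1) * f1 \<theta> + l0 * l1 * f \<theta>\<bar>) ` {a..b})"
      by (rule cont_bdd) (intro continuous_intros fc f1c f2c)
    have Kge: "\<bar>f2 \<theta> - (l0 + l1) * f1 \<theta> + l0 * l1 * f \<theta>\<bar> \<le> K" if "\<theta> \<in> {a..b}" for \<theta>
      unfolding K_def using bddf that by (rule cSUP_upper2) simp
    have "a \<in> {a..b}" using assms by simp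
    from Kge[OF this] have K0: "0 \<le> K" by (rule order_trans[OF abs_ge_zero])
    have gp: "\<forall>s\<in>{a..b}. K * u s - f s \<ge> 0"
    proof (rule maxp(1)[where g="\<lambda>s. K * u s - f s" and gd="\<lambda>s. K * u1 s - f1 s" and gdd="\<lambda>s. K * u2 s - f2 s" and la=l0 and lb=l1, OF assms])
      show "\<forall>t\<in>{a..b}. ((\<lambda>s. K * u s - f s) has_real_derivative K * u1 t - f1 t) (at t within {a..b})"
        using ud1 fd1 by (auto intro!: derivative_eq_intros)
      show "\<forall>t\<in>{a..b}. ((\<lambda>s. K * u1 s - f1 s) has_real_derivative K * u2 t - f2 t) (at t within {a..b})"
        using ud2 fd2 by (auto intro!: derivative_eq_intros)
      show "K * u a - f a = 0" "K * u b - f b = 0" using H U by auto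
      show "\<forall>t\<in>{a..b}. K * u2 t - f2 t - (l0 + l1) * (K * u1 t - f1 t) + l0 * l1 * (K * u t - f t) \<le> 0"
      proof
        fix t assume t: "t \<in> {a..b}"
        have "K * u2 t - f2 t - (l0 + l1) * (K * u1 t - f1 t) + l0 * l1 * (K * u t - f t)
          = K * (u2 t - (l0+l1) * u1 t + l0*l1 * u t) - (f2 t - (l0 + l1) * f1 t + l0 * l1 * f t)"
          by (simp add: algebra_simps)
        then show "K * u2 t - f2 t - (l0 + l1) * (K * u1 t - f1 t) + l0 * l1 * (K * u t - f t) \<le> 0"
          using U(4) Kge[OF t] by (simp add: abs_le_iff)
      qed
    qed
    have gm: "\<forall>s\<in>{a..b}. K * u s + f s \<ge> 0"
    proof (rule maxp(1)[where g="\<lambda>s. K * u s + f s" and gd="\<lambda>s. K * u1 s + f1 s" and gdd="\<lambda>s. K * u2 s + f2 s" and la=l0 and lb=l1, OF assms])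
      show "\<forall>t\<in>{a..b}. ((\<lambda>s. K * u s + f s) has_real_derivative K * u1 t + f1 t) (at t within {a..b})"
        using ud1 fd1 by (auto intro!: derivative_eq_intros)
      show "\<forall>t\<in>{a..b}. ((\<lambda>s. K * u1 s + f1 s) has_real_derivative K * u2 t + f2 t) (at t within {a..b})"
        using ud2 fd2 by (auto intro!: derivative_eq_intros)
      show "K * u a + f a = 0" "K * u b + f b = 0" using H U by auto
      show "\<forall>t\<in>{a..b}. K * u2 t + f2 t - (l0 + l1) * (K * u1 t + f1 t) + l0 * l1 * (K * u t + f t) \<le> 0"
      proof
        fix t assume t: "t \<in> {a..b}"
        have "K * u2 t + f2 t - (l0 + l1) * (K * u1 t + f1 t) + l0 * l1 * (K * u t + f t)
          = K * (u2 t - (l0+l1) * u1 t + l0*l1 * u t) + (f2 t - (l0 + l1) * f1 t + l0 * l1 * f t)"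
          by (simp add: algebra_simps)
        then show "K * u2 t + f2 t - (l0 + l1) * (K * u1 t + f1 t) + l0 * l1 * (K * u t + f t) \<le> 0"
          using U(4) Kge[OF t] by (simp add: abs_le_iff)
      qed
    qed
    have "\<bar>f t\<bar> \<le> K * u t" unfolding abs_le_iff using gp[rule_format, OF t] gm[rule_format, OF t] by linarith
    also have "\<dots> \<le> K * \<bar>u t\<bar>" using K0 by (simp add: mult_left_mono)
    also have "\<dots> \<le> K * M" using K0 Mge[OF t] by (simp add: mult_left_mono)
    finally show "\<bar>f t\<bar> \<le> M * K" by (simp add: mult.commute)
  qed
  have least: "M \<le> C" if C: "\<forall>f f1 f2. C2_on a b f f1 f2 \<and> f a = 0 \<and> f b = 0 \<longrightarrow>
            (\<forall>t\<in>{a..b}. \<bar>f t\<bar> \<le> C * (SUP \<theta>\<in>{a..b}. \<bar>f2 \<theta> - (l0 + l1) * f1 \<theta> + l0 * l1 * f \<theta>\<bar>))" for C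
  proof -
    have e: "(\<lambda>\<theta>. \<bar>u2 \<theta> - (l0 + l1) * u1 \<theta> + l0 * l1 * u \<theta>\<bar>) = (\<lambda>\<theta>. 1)"
      using U(4) by simp
    have s1: "(SUP \<theta>\<in>{a..b}. \<bar>u2 \<theta> - (l0 + l1) * u1 \<theta> + l0 * l1 * u \<theta>\<bar>) = 1"
      unfolding e using assms by simp
    have "C2_on a b u u1 u2 \<and> u a = 0 \<and> u b = 0" using Cu U(2,3) by blast
    from C[rule_format, OF this]
    have "\<forall>t\<in>{a..b}. \<bar>u t\<bar> \<le> C * (SUP \<theta>\<in>{a..b}. \<bar>u2 \<theta> - (l0 + l1) * u1 \<theta> + l0 * l1 * u \<theta>\<bar>)" by blast
    then have "\<forall>t\<in>{a..b}. \<bar>u t\<bar> \<le> C" unfolding s1 by simp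
    then show ?thesis unfolding M_def using assms by (intro cSUP_least) auto
  qed
  have mem: "M \<in> {C. \<forall>f f1 f2. C2_on a b f f1 f2 \<and> f a = 0 \<and> f b = 0 \<longrightarrow>
            (\<forall>t\<in>{a..b}. \<bar>f t\<bar> \<le> C * (SUP \<theta>\<in>{a..b}. \<bar>f2 \<theta> - (l0 + l1) * f1 \<theta> + l0 * l1 * f \<theta>\<bar>))}"
    using inS by (simp only: mem_Collect_eq)
  have lall: "\<forall>C\<in>{C. \<forall>f f1 f2. C2_on a b f f1 f2 \<and> f a = 0 \<and> f b = 0 \<longrightarrow>
            (\<forall>t\<in>{a..b}. \<bar>f t\<bar> \<le> C * (SUP \<theta>\<in>{a..b}. \<bar>f2 \<theta> - (l0 + l1) * f1 \<theta> + l0 * l1 * f \<theta>\<bar>))}. M \<le> C"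
    by (intro ballI least) (simp only: mem_Collect_eq)
  show ?thesis unfolding Let_def Mconst_def Om M_def[symmetric]
    by (rule conjI[OF conjI[OF mem lall] pos])
qed

end
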